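(* Let $p$ be a prime, $a\in\mathbb{Q}_p$, and $f:\mathbb{Q}_p\to\mathbb{Q}_p$, $f(x)=x^3+ax^2$. Let $x^{(0)}\in\mathbb{Q}_p$ be a fixed point of $f$. If $x\in\mathbb{Q}_p$ satisfies $$\max\Big\{|3x^{(0)}+a|_p\,|x-x^{(0)}|_p,\ |x-x^{(0)}|_p^2\Big\}<|f'(x^{(0)})|_p,$$ then $$|f(x)-f(x^{(0)})|_p=|f'(x^{(0)})|_p\,|x-x^{(0)}|_p.$$
   Context: $\mathbb{Q}_p$ is the field of $p$-adic numbers with $p$-adic norm $|\cdot|_p$; $f'(x)=3x^2+2ax$ is the derivative of $f$. *)

theory Defs
  imports Complex_Main "HOL-Computational_Algebra.Primes"
begin

definition padic_val_rat :: "nat \<Rightarrow> rat \<Rightarrow> int" where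
  "padic_val_rat p r = (if r = 0 then 0 else
     (case quotient_of r of (n, d) \<Rightarrow>
        int (multiplicity (int p) n) - int (multiplicity (int p) d)))"

definition padic_abs_rat :: "nat \<Rightarrow> rat \<Rightarrow> real" where
  "padic_abs_rat p r = (if r = 0 then 0 else real p powr (- real_of_int (padic_val_rat p r)))"

definition padic_cauchy :: "nat \<Rightarrow> (nat \<Rightarrow> rat) \<Rightarrow> bool" where
  "padic_cauchy p X \<longleftrightarrow>
     (\<forall>e>0. \<exists>N. \<forall>m\<ge>N. \<forall>n\<ge>N. padic_abs_rat p (X m - X n) < e)"

definition padic_null :: "nat \<Rightarrow> (nat \<Rightarrow> rat) \<Rightarrow> bool" where
  "padic_null p X \<longleftrightarrow> (\<lambda>n. padic_abs_rat p (X n)) \<longlonglongrightarrow> 0"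

definition padic_class :: "nat \<Rightarrow> (nat \<Rightarrow> rat) \<Rightarrow> (nat \<Rightarrow> rat) set" where
  "padic_class p X = {Y. padic_cauchy p Y \<and> padic_null p (\<lambda>n. X n - Y n)}"

definition Qp :: "nat \<Rightarrow> (nat \<Rightarrow> rat) set set" where
  "Qp p = padic_class p ` {X. padic_cauchy p X}"

definition padic_rep :: "(nat \<Rightarrow> rat) set \<Rightarrow> nat \<Rightarrow> rat" where
  "padic_rep A = (SOME X. X \<in> A)"

definition padic_add :: "nat \<Rightarrow> (nat \<Rightarrow> rat) set \<Rightarrow> (nat \<Rightarrow> rat) set \<Rightarrow> (nat \<Rightarrow> rat) set" where
  "padic_add p A B = padic_class p (\<lambda>n. padic_rep A n + padic_rep B n)"

definition padic_sub :: "nat \<Rightarrow> (nat \<Rightarrow> rat) set \<Rightarrow> (nat \<Rightarrow> rat) set \<Rightarrow> (nat \<Rightarrow> rat) set" where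
  "padic_sub p A B = padic_class p (\<lambda>n. padic_rep A n - padic_rep B n)"

definition padic_mult :: "nat \<Rightarrow> (nat \<Rightarrow> rat) set \<Rightarrow> (nat \<Rightarrow> rat) set \<Rightarrow> (nat \<Rightarrow> rat) set" where
  "padic_mult p A B = padic_class p (\<lambda>n. padic_rep A n * padic_rep B n)"

definition padic_of_rat :: "nat \<Rightarrow> rat \<Rightarrow> (nat \<Rightarrow> rat) set" where
  "padic_of_rat p r = padic_class p (\<lambda>_. r)"

definition padic_norm :: "nat \<Rightarrow> (nat \<Rightarrow> rat) set \<Rightarrow> real" where
  "padic_norm p A = lim (\<lambda>n. padic_abs_rat p (padic_rep A n))"

definition cubic_f :: "nat \<Rightarrow> (nat \<Rightarrow> rat) set \<Rightarrow> (nat \<Rightarrow> rat) set \<Rightarrow> (nat \<Rightarrow> rat) set" where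
  "cubic_f p a x = padic_add p (padic_mult p x (padic_mult p x x)) (padic_mult p a (padic_mult p x x))"

definition cubic_f' :: "nat \<Rightarrow> (nat \<Rightarrow> rat) set \<Rightarrow> (nat \<Rightarrow> rat) set \<Rightarrow> (nat \<Rightarrow> rat) set" where
  "cubic_f' p a x = padic_add p (padic_mult p (padic_of_rat p 3) (padic_mult p x x))
                                (padic_mult p (padic_of_rat p 2) (padic_mult p a x))"

end

theory Submission
  imports Defs
begin


lemma rat_frac_rep:
  fixes r :: rat obtains n d :: int where "r = of_int n / of_int d" "d \<noteq> 0"
proof -
  obtain n d where q: "quotient_of r = (n,d)" by (cases "quotient_of r")
  show ?thesis using that[OF quotient_of_div[OF q]] quotient_of_denom_pos[OF q] by simp
qed

lemma val_frac:
  assumes "prime p" "n \<noteq> 0" "d \<noteq> 0"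
  shows "padic_val_rat p (of_int n / of_int d) = int (multiplicity (int p) n) - int (multiplicity (int p) d)"
proof -
  let ?r = "(of_int n / of_int d :: rat)"
  have r0: "?r \<noteq> 0" using assms by simp
  obtain n0 d0 where q: "quotient_of ?r = (n0,d0)" by (cases "quotient_of ?r")
  have d0: "d0 > 0" using quotient_of_denom_pos[OF q] .
  have e: "?r = of_int n0 / of_int d0" using quotient_of_div[OF q] .
  have n0: "n0 \<noteq> 0" using e r0 by auto
  have "(of_int (n * d0) :: rat) = of_int (n0 * d)" using e assms d0
    by (simp add: field_simps)
  hence eq: "n*d0 = n0*d" by (simp only: of_int_eq_iff)
  have pe: "prime_elem (int p)" using assms(1) by (simp add: prime_nat_int_transfer prime_imp_prime_elem)
  have "multiplicity (int p) (n*d0) = multiplicity (int p) (n0*d)" using eq by simp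
  hence "multiplicity (int p) n + multiplicity (int p) d0 = multiplicity (int p) n0 + multiplicity (int p) d"
    using pe assms d0 n0 by (simp add: prime_elem_multiplicity_mult_distrib)
  thus ?thesis using q r0 by (simp add: padic_val_rat_def)
qed

lemma val_mult:
  assumes "prime p" "r \<noteq> 0" "s \<noteq> 0"
  shows "padic_val_rat p (r*s) = padic_val_rat p r + padic_val_rat p s"
proof -
  obtain n1 d1 where 1: "r = of_int n1 / of_int d1" "d1 \<noteq> 0" by (rule rat_frac_rep)
  obtain n2 d2 where 2: "s = of_int n2 / of_int d2" "d2 \<noteq> 0" by (rule rat_frac_rep)
  have n: "n1 \<noteq> 0" "n2 \<noteq> 0" using 1 2 assms by auto
  have pe: "prime_elem (int p)" using assms(1) by (simp add: prime_nat_int_transfer prime_imp_prime_elem)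
  have "r*s = of_int (n1*n2) / of_int (d1*d2)" using 1 2 by simp
  hence "padic_val_rat p (r*s) = int (multiplicity (int p) (n1*n2)) - int (multiplicity (int p) (d1*d2))"
    by (simp only:) (rule val_frac[OF assms(1)], use n 1 2 in auto)
  also have "\<dots> = padic_val_rat p r + padic_val_rat p s"
    using val_frac[OF assms(1)] n 1 2 pe by (simp add: prime_elem_multiplicity_mult_distrib)
  finally show ?thesis .
qed

lemma mult_sum_ge:
  fixes a b :: int
  assumes "prime_elem q" "k \<le> multiplicity q a" "k \<le> multiplicity q b" "a + b \<noteq> 0"
  shows "k \<le> multiplicity q (a + b)"
proof (rule multiplicity_geI)
  show "q ^ k dvd a + b" using assms multiplicity_dvd' by (metis dvd_add)
  show "\<not> is_unit q" using assms(1) prime_elem_not_unit by blast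
qed (use assms in auto)

lemma val_add:
  assumes "prime p" "r \<noteq> 0" "s \<noteq> 0" "r + s \<noteq> 0"
  shows "min (padic_val_rat p r) (padic_val_rat p s) \<le> padic_val_rat p (r+s)"
proof -
  obtain n1 d1 where 1: "r = of_int n1 / of_int d1" "d1 \<noteq> 0" by (rule rat_frac_rep)
  obtain n2 d2 where 2: "s = of_int n2 / of_int d2" "d2 \<noteq> 0" by (rule rat_frac_rep)
  have n: "n1 \<noteq> 0" "n2 \<noteq> 0" using 1 2 assms by auto
  have pe: "prime_elem (int p)" using assms(1) by (simp add: prime_nat_int_transfer prime_imp_prime_elem)
  have r': "r = of_int (n1*d2) / of_int (d1*d2)" using 1 2 by simp
  have s': "s = of_int (n2*d1) / of_int (d1*d2)" using 1 2 by simp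
  have rs: "r+s = of_int (n1*d2 + n2*d1) / of_int (d1*d2)" using 1 2 by (simp add: field_simps)
  have N: "n1*d2 + n2*d1 \<noteq> 0" using rs assms(4) by (metis div_0 of_int_0)
  let ?m = "multiplicity (int p)"
  have vr: "padic_val_rat p r = int (?m (n1*d2)) - int (?m (d1*d2))"
    by (subst r') (rule val_frac[OF assms(1)], use n 1 2 in auto)
  have vs: "padic_val_rat p s = int (?m (n2*d1)) - int (?m (d1*d2))"
    by (subst s') (rule val_frac[OF assms(1)], use n 1 2 in auto)
  have vrs: "padic_val_rat p (r+s) = int (?m (n1*d2 + n2*d1)) - int (?m (d1*d2))"
    by (subst rs) (rule val_frac[OF assms(1)], use N 1 2 in auto)
  have "min (?m (n1*d2)) (?m (n2*d1)) \<le> ?m (n1*d2 + n2*d1)"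
    by (rule mult_sum_ge[OF pe _ _ N]) auto
  thus ?thesis using vr vs vrs by linarith
qed

lemma abs_nonneg: "padic_abs_rat p r \<ge> 0"
  by (simp add: padic_abs_rat_def)

lemma abs_zero[simp]: "padic_abs_rat p 0 = 0"
  by (simp add: padic_abs_rat_def)

lemma abs_mult:
  assumes "prime p"
  shows "padic_abs_rat p (r*s) = padic_abs_rat p r * padic_abs_rat p s"
proof (cases "r = 0 \<or> s = 0")
  case True thus ?thesis by (auto simp: padic_abs_rat_def)
next
  case False
  thus ?thesis using val_mult[OF assms, of r s]
    by (simp add: padic_abs_rat_def powr_add[symmetric] algebra_simps)
qed

lemma abs_ultra:
  assumes "prime p"
  shows "padic_abs_rat p (r+s) \<le> max (padic_abs_rat p r) (padic_abs_rat p s)"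
proof (cases "r = 0 \<or> s = 0 \<or> r + s = 0")
  case True thus ?thesis using abs_nonneg[of p r] abs_nonneg[of p s] by (auto simp: le_max_iff_disj)
next
  case False
  have p1: "real p > 1" using assms prime_gt_1_nat by simp
  have "min (padic_val_rat p r) (padic_val_rat p s) \<le> padic_val_rat p (r+s)"
    using val_add[OF assms] False by auto
  hence "padic_val_rat p r \<le> padic_val_rat p (r+s) \<or> padic_val_rat p s \<le> padic_val_rat p (r+s)" by linarith
  thus ?thesis using False p1 by (auto simp: padic_abs_rat_def max_def)
qed

lemma abs_minus_one:
  assumes "prime p" shows "padic_abs_rat p (-1) = 1"
proof -
  have "(-1::rat) = of_int (-1) / of_int 1" by simp
  hence "padic_val_rat p (-1) = 0" using val_frac[OF assms, of "-1" 1] by (simp add: multiplicity_unit_right)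
  thus ?thesis using prime_gt_0_nat[OF assms] by (simp add: padic_abs_rat_def)
qed

lemma abs_uminus:
  assumes "prime p" shows "padic_abs_rat p (- r) = padic_abs_rat p r"
  using abs_mult[OF assms, of "-1" r] abs_minus_one[OF assms] by simp

lemma abs_commute:
  assumes "prime p" shows "padic_abs_rat p (r - s) = padic_abs_rat p (s - r)"
  using abs_uminus[OF assms, of "s - r"] by simp

lemma abs_tri:
  assumes "prime p" shows "padic_abs_rat p (r+s) \<le> padic_abs_rat p r + padic_abs_rat p s"
  using abs_ultra[OF assms, of r s] abs_nonneg[of p r] abs_nonneg[of p s] by linarith

lemma abs_strict:
  assumes "prime p" "padic_abs_rat p s < padic_abs_rat p r"
  shows "padic_abs_rat p (r+s) = padic_abs_rat p r"
proof -
  have "padic_abs_rat p r \<le> max (padic_abs_rat p (r+s)) (padic_abs_rat p (-s))"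
    using abs_ultra[OF assms(1), of "r+s" "-s"] by simp
  hence 1: "padic_abs_rat p r \<le> padic_abs_rat p (r+s)" using assms abs_uminus[OF assms(1)] by auto
  have "padic_abs_rat p (r+s) \<le> padic_abs_rat p r" using abs_ultra[OF assms(1), of r s] assms by auto
  thus ?thesis using 1 by simp
qed

lemma abs_rev_tri:
  assumes "prime p" shows "\<bar>padic_abs_rat p r - padic_abs_rat p s\<bar> \<le> padic_abs_rat p (r - s)"
  using abs_tri[OF assms, of "r - s" s] abs_tri[OF assms, of "s - r" r] abs_commute[OF assms, of r s]
  by (simp add: abs_le_iff) 



lemma cauchy_conv:
  assumes "prime p" "padic_cauchy p X"
  shows "convergent (\<lambda>n. padic_abs_rat p (X n))"
proof (rule Cauchy_convergent, rule CauchyI)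
  fix e :: real assume "0 < e"
  then obtain N where N: "\<forall>m\<ge>N. \<forall>n\<ge>N. padic_abs_rat p (X m - X n) < e"
    using assms(2) unfolding padic_cauchy_def by blast
  show "\<exists>M. \<forall>m\<ge>M. \<forall>n\<ge>M. norm (padic_abs_rat p (X m) - padic_abs_rat p (X n)) < e"
    using N abs_rev_tri[OF assms(1)] by (metis order.strict_trans1 real_norm_def)
qed

lemma cauchy_bdd:
  assumes "prime p" "padic_cauchy p X"
  obtains K where "K > 0" "\<And>n. padic_abs_rat p (X n) \<le> K"
proof -
  have "Bseq (\<lambda>n. padic_abs_rat p (X n))" using convergent_imp_Bseq cauchy_conv[OF assms] by blast
  then obtain K where "K > 0" "\<forall>n. norm (padic_abs_rat p (X n)) \<le> K" by (rule BseqE)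
  thus ?thesis using that abs_nonneg by (simp add: abs_of_nonneg)
qed

lemma cauchy_const: "padic_cauchy p (\<lambda>n. c)"
  by (simp add: padic_cauchy_def)

lemma cauchy_add:
  assumes "prime p" "padic_cauchy p X" "padic_cauchy p Y"
  shows "padic_cauchy p (\<lambda>n. X n + Y n)"
  unfolding padic_cauchy_def
proof (intro allI impI)
  fix e :: real assume e: "0 < e"
  obtain N1 where N1: "\<forall>m\<ge>N1. \<forall>n\<ge>N1. padic_abs_rat p (X m - X n) < e/2"
    using assms(2) e unfolding padic_cauchy_def by (meson half_gt_zero)
  obtain N2 where N2: "\<forall>m\<ge>N2. \<forall>n\<ge>N2. padic_abs_rat p (Y m - Y n) < e/2"
    using assms(3) e unfolding padic_cauchy_def by (meson half_gt_zero)
  show "\<exists>N. \<forall>m\<ge>N. \<forall>n\<ge>N. padic_abs_rat p (X m + Y m - (X n + Y n)) < e"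
  proof (intro exI allI impI)
    fix m n assume "max N1 N2 \<le> m" "max N1 N2 \<le> n"
    hence "padic_abs_rat p (X m - X n) < e/2" "padic_abs_rat p (Y m - Y n) < e/2" using N1 N2 by auto
    moreover have "padic_abs_rat p (X m + Y m - (X n + Y n)) = padic_abs_rat p ((X m - X n) + (Y m - Y n))"
      by (intro arg_cong[where f="padic_abs_rat p"]) simp
    ultimately show "padic_abs_rat p (X m + Y m - (X n + Y n)) < e"
      using abs_tri[OF assms(1), of "X m - X n" "Y m - Y n"] by linarith
  qed
qed

lemma cauchy_uminus:
  assumes "prime p" "padic_cauchy p X"
  shows "padic_cauchy p (\<lambda>n. - X n)"
  using assms abs_uminus[OF assms(1)] unfolding padic_cauchy_def
  by (metis minus_diff_eq minus_diff_minus)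

lemma cauchy_diff:
  assumes "prime p" "padic_cauchy p X" "padic_cauchy p Y"
  shows "padic_cauchy p (\<lambda>n. X n - Y n)"
  using cauchy_add[OF assms(1,2) cauchy_uminus[OF assms(1,3)]] by simp

lemma cauchy_mult:
  assumes "prime p" "padic_cauchy p X" "padic_cauchy p Y"
  shows "padic_cauchy p (\<lambda>n. X n * Y n)"
  unfolding padic_cauchy_def
proof (intro allI impI)
  fix e :: real assume e: "0 < e"
  obtain K1 where K1: "K1 > 0" "\<And>n. padic_abs_rat p (X n) \<le> K1" using cauchy_bdd[OF assms(1,2)] by blast
  obtain K2 where K2: "K2 > 0" "\<And>n. padic_abs_rat p (Y n) \<le> K2" using cauchy_bdd[OF assms(1,3)] by blast
  have e1: "e / (2*K2) > 0" "e / (2*K1) > 0" using e K1 K2 by auto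
  obtain N1 where N1: "\<forall>m\<ge>N1. \<forall>n\<ge>N1. padic_abs_rat p (X m - X n) < e/(2*K2)"
    using assms(2) e1 unfolding padic_cauchy_def by meson
  obtain N2 where N2: "\<forall>m\<ge>N2. \<forall>n\<ge>N2. padic_abs_rat p (Y m - Y n) < e/(2*K1)"
    using assms(3) e1 unfolding padic_cauchy_def by meson
  show "\<exists>N. \<forall>m\<ge>N. \<forall>n\<ge>N. padic_abs_rat p (X m * Y m - X n * Y n) < e"
  proof (intro exI allI impI)
    fix m n assume "max N1 N2 \<le> m" "max N1 N2 \<le> n"
    hence a: "padic_abs_rat p (X m - X n) < e/(2*K2)" and b: "padic_abs_rat p (Y m - Y n) < e/(2*K1)"
      using N1 N2 by auto
    have eq: "X m * Y m - X n * Y n = X m * (Y m - Y n) + (X m - X n) * Y n" by (simp add: algebra_simps)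
    have "padic_abs_rat p (X m * (Y m - Y n)) \<le> K1 * (e/(2*K1))"
      unfolding abs_mult[OF assms(1)]
      using K1(2)[of m] b abs_nonneg[of p "X m"] abs_nonneg[of p "Y m - Y n"] K1(1)
      by (intro mult_mono) auto
    also have "\<dots> = e/2" using K1 by simp
    finally have c: "padic_abs_rat p (X m * (Y m - Y n)) \<le> e/2" .
    have "padic_abs_rat p ((X m - X n) * Y n) \<le> padic_abs_rat p (X m - X n) * K2"
      unfolding abs_mult[OF assms(1)]
      using K2(2)[of n] abs_nonneg[of p "X m - X n"] by (intro mult_left_mono) auto
    also have "\<dots> < (e/(2*K2)) * K2"
      using a K2(1) by (intro mult_strict_right_mono) auto
    also have "\<dots> = e/2" using K2 by simp
    finally have d: "padic_abs_rat p ((X m - X n) * Y n) < e/2" .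
    show "padic_abs_rat p (X m * Y m - X n * Y n) < e"
      unfolding eq using abs_tri[OF assms(1), of "X m * (Y m - Y n)" "(X m - X n) * Y n"] c d by simp
  qed
qed

lemma null_cmp:
  fixes f g :: "nat \<Rightarrow> real"
  assumes "g \<longlonglongrightarrow> 0" "\<And>n. \<bar>f n\<bar> \<le> g n"
  shows "f \<longlonglongrightarrow> 0"
proof (rule tendsto_0_le[where K=1, OF assms(1)])
  show "\<forall>\<^sub>F x in sequentially. norm (f x) \<le> norm (g x) * 1"
  proof (intro always_eventually allI)
    fix x
    have "\<bar>g x\<bar> = g x" using assms(2)[of x] by linarith
    thus "norm (f x) \<le> norm (g x) * 1" using assms(2)[of x] by simp
  qed
qed

lemma null_add:
  assumes "prime p" "padic_null p X" "padic_null p Y"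
  shows "padic_null p (\<lambda>n. X n + Y n)"
  unfolding padic_null_def
proof (rule null_cmp[where g = "\<lambda>n. padic_abs_rat p (X n) + padic_abs_rat p (Y n)"])
  show "(\<lambda>n. padic_abs_rat p (X n) + padic_abs_rat p (Y n)) \<longlonglongrightarrow> 0"
    by (rule tendsto_add_zero[OF assms(2,3)[unfolded padic_null_def]])
  fix n show "\<bar>padic_abs_rat p (X n + Y n)\<bar> \<le> padic_abs_rat p (X n) + padic_abs_rat p (Y n)"
    using abs_tri[OF assms(1)] abs_nonneg[of p "X n + Y n"] by simp
qed

lemma null_uminus:
  assumes "prime p" "padic_null p X"
  shows "padic_null p (\<lambda>n. - X n)"
  using assms abs_uminus[OF assms(1)] unfolding padic_null_def by simp

lemma null_bmult:
  assumes "prime p" "padic_null p X" "\<And>n. padic_abs_rat p (Y n) \<le> K"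
  shows "padic_null p (\<lambda>n. Y n * X n)"
proof (unfold padic_null_def, rule null_cmp[where g = "\<lambda>n. K * padic_abs_rat p (X n)"])
  show "(\<lambda>n. K * padic_abs_rat p (X n)) \<longlonglongrightarrow> 0"
    using assms(2) unfolding padic_null_def by (rule tendsto_mult_right_zero)
  fix n show "\<bar>padic_abs_rat p (Y n * X n)\<bar> \<le> K * padic_abs_rat p (X n)"
    using abs_nonneg[of p "Y n * X n"] abs_nonneg[of p "X n"] assms(3)[of n]
    by (simp add: abs_mult[OF assms(1)] mult_right_mono)
qed

lemma null_zero: "padic_null p (\<lambda>n. 0)"
  by (simp add: padic_null_def)

definition eqv :: "nat \<Rightarrow> (nat \<Rightarrow> rat) \<Rightarrow> (nat \<Rightarrow> rat) \<Rightarrow> bool" where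
  "eqv p X Y = padic_null p (\<lambda>n. X n - Y n)"

lemma eqv_sym: assumes "prime p" "eqv p X Y" shows "eqv p Y X"
proof -
  have "padic_null p (\<lambda>n. - (X n - Y n))" using null_uminus[OF assms(1)] assms(2) unfolding eqv_def .
  thus ?thesis unfolding eqv_def by simp
qed

lemma eqv_trans: assumes "prime p" "eqv p X Y" "eqv p Y Z" shows "eqv p X Z"
proof -
  have "padic_null p (\<lambda>n. (X n - Y n) + (Y n - Z n))" using null_add[OF assms(1)] assms(2,3) unfolding eqv_def .
  thus ?thesis unfolding eqv_def by simp
qed

lemma class_mem: "padic_cauchy p X \<Longrightarrow> X \<in> padic_class p X"
  by (simp add: padic_class_def padic_null_def)

lemma rep_class:
  assumes "padic_cauchy p X"
  shows "padic_cauchy p (padic_rep (padic_class p X)) \<and> eqv p X (padic_rep (padic_class p X))"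
proof -
  have "padic_rep (padic_class p X) \<in> padic_class p X"
    unfolding padic_rep_def by (rule someI[where P="\<lambda>Y. Y \<in> padic_class p X", OF class_mem[OF assms]])
  thus ?thesis by (simp add: padic_class_def eqv_def)
qed

lemma class_eq:
  assumes "prime p" "eqv p X Y"
  shows "padic_class p X = padic_class p Y"
proof -
  have yx: "eqv p Y X" using eqv_sym[OF assms(1,2)] .
  have "eqv p X Z \<longleftrightarrow> eqv p Y Z" for Z
    using eqv_trans[OF assms(1) assms(2), of Z] eqv_trans[OF assms(1) yx, of Z] by blast
  thus ?thesis unfolding padic_class_def eqv_def by simp
qed

lemma rep_eqv:
  assumes "prime p" "padic_cauchy p X"
  shows "eqv p (padic_rep (padic_class p X)) X"
  using rep_class[OF assms(2)] eqv_sym[OF assms(1)] by blast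

lemma add_class:
  assumes "prime p" "padic_cauchy p X" "padic_cauchy p Y"
  shows "padic_add p (padic_class p X) (padic_class p Y) = padic_class p (\<lambda>n. X n + Y n)"
proof -
  let ?X = "padic_rep (padic_class p X)" and ?Y = "padic_rep (padic_class p Y)"
  have "padic_null p (\<lambda>n. (?X n - X n) + (?Y n - Y n))"
    using null_add[OF assms(1)] rep_eqv[OF assms(1,2)] rep_eqv[OF assms(1,3)] unfolding eqv_def .
  hence "eqv p (\<lambda>n. ?X n + ?Y n) (\<lambda>n. X n + Y n)"
    unfolding eqv_def by (simp add: algebra_simps)
  thus ?thesis unfolding padic_add_def by (rule class_eq[OF assms(1)])
qed

lemma sub_class:
  assumes "prime p" "padic_cauchy p X" "padic_cauchy p Y"
  shows "padic_sub p (padic_class p X) (padic_class p Y) = padic_class p (\<lambda>n. X n - Y n)"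
proof -
  let ?X = "padic_rep (padic_class p X)" and ?Y = "padic_rep (padic_class p Y)"
  have "padic_null p (\<lambda>n. - (?Y n - Y n))"
    using null_uminus[OF assms(1)] rep_eqv[OF assms(1,3)] unfolding eqv_def .
  hence "padic_null p (\<lambda>n. (?X n - X n) + - (?Y n - Y n))"
    using null_add[OF assms(1)] rep_eqv[OF assms(1,2)] unfolding eqv_def by blast
  hence "eqv p (\<lambda>n. ?X n - ?Y n) (\<lambda>n. X n - Y n)"
    unfolding eqv_def by (simp add: algebra_simps)
  thus ?thesis unfolding padic_sub_def by (rule class_eq[OF assms(1)])
qed

lemma mult_class:
  assumes "prime p" "padic_cauchy p X" "padic_cauchy p Y"
  shows "padic_mult p (padic_class p X) (padic_class p Y) = padic_class p (\<lambda>n. X n * Y n)"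
proof -
  let ?X = "padic_rep (padic_class p X)" and ?Y = "padic_rep (padic_class p Y)"
  have c: "padic_cauchy p ?X" using rep_class[OF assms(2)] by blast
  obtain K1 where K1: "\<And>n. padic_abs_rat p (?X n) \<le> K1" using cauchy_bdd[OF assms(1) c] by blast
  obtain K2 where K2: "\<And>n. padic_abs_rat p (Y n) \<le> K2" using cauchy_bdd[OF assms(1,3)] by blast
  have 1: "padic_null p (\<lambda>n. ?X n * (?Y n - Y n))"
    using null_bmult[OF assms(1) _ K1] rep_eqv[OF assms(1,3)] unfolding eqv_def .
  have 2: "padic_null p (\<lambda>n. Y n * (?X n - X n))"
    using null_bmult[OF assms(1) _ K2] rep_eqv[OF assms(1,2)] unfolding eqv_def .
  have "padic_null p (\<lambda>n. ?X n * (?Y n - Y n) + Y n * (?X n - X n))"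
    using null_add[OF assms(1) 1 2] .
  hence "eqv p (\<lambda>n. ?X n * ?Y n) (\<lambda>n. X n * Y n)"
    unfolding eqv_def by (simp add: algebra_simps)
  thus ?thesis unfolding padic_mult_def by (rule class_eq[OF assms(1)])
qed

definition Lp :: "nat \<Rightarrow> (nat \<Rightarrow> rat) \<Rightarrow> real" where
  "Lp p X = lim (\<lambda>n. padic_abs_rat p (X n))"

lemma Lp_tendsto: "prime p \<Longrightarrow> padic_cauchy p X \<Longrightarrow> (\<lambda>n. padic_abs_rat p (X n)) \<longlonglongrightarrow> Lp p X"
  unfolding Lp_def using cauchy_conv convergent_LIMSEQ_iff by blast

lemma norm_class:
  assumes "prime p" "padic_cauchy p X"
  shows "padic_norm p (padic_class p X) = Lp p X"
proof -
  let ?X = "padic_rep (padic_class p X)"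
  have e: "eqv p X ?X" and c: "padic_cauchy p ?X" using rep_class assms by blast+
  have "(\<lambda>n. padic_abs_rat p (X n) - padic_abs_rat p (?X n)) \<longlonglongrightarrow> 0"
    using e unfolding eqv_def padic_null_def
    by (rule null_cmp) (rule abs_rev_tri[OF assms(1)])
  hence "(\<lambda>n. padic_abs_rat p (X n) - (padic_abs_rat p (X n) - padic_abs_rat p (?X n))) \<longlonglongrightarrow> Lp p X - 0"
    by (intro tendsto_diff Lp_tendsto[OF assms])
  hence "(\<lambda>n. padic_abs_rat p (?X n)) \<longlonglongrightarrow> Lp p X" by simp
  thus ?thesis unfolding padic_norm_def by (rule limI)
qed

lemma Lp_mult:
  assumes "prime p" "padic_cauchy p X" "padic_cauchy p Y"
  shows "Lp p (\<lambda>n. X n * Y n) = Lp p X * Lp p Y"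
  unfolding Lp_def[of p "\<lambda>n. X n * Y n"] abs_mult[OF assms(1)]
  by (intro limI tendsto_mult Lp_tendsto assms)

lemma Lp_strict:
  assumes "prime p" "padic_cauchy p X" "padic_cauchy p Y" "Lp p Y < Lp p X"
  shows "Lp p (\<lambda>n. X n + Y n) = Lp p X"
proof -
  have "(\<lambda>n. padic_abs_rat p (X n) - padic_abs_rat p (Y n)) \<longlonglongrightarrow> Lp p X - Lp p Y"
    by (intro tendsto_diff Lp_tendsto assms)
  hence "eventually (\<lambda>n. padic_abs_rat p (X n) - padic_abs_rat p (Y n) > 0) sequentially"
    using assms(4) by (intro order_tendstoD(1)) auto
  hence ev: "eventually (\<lambda>n. padic_abs_rat p (X n) = padic_abs_rat p (X n + Y n)) sequentially"
    by eventually_elim (use abs_strict[OF assms(1)] in auto)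
  have "(\<lambda>n. padic_abs_rat p (X n + Y n)) \<longlonglongrightarrow> Lp p X"
    using tendsto_cong[OF ev] Lp_tendsto[OF assms(1,2)] by blast
  thus ?thesis unfolding Lp_def[of p "\<lambda>n. X n + Y n"] by (rule limI)
qed



lemma Qp_class: "A \<in> Qp p \<Longrightarrow> \<exists>X. padic_cauchy p X \<and> A = padic_class p X"
  unfolding Qp_def by blast

theorem lemma4p1:
  fixes p :: nat and a x0 x :: "(nat \<Rightarrow> rat) set"
  assumes "prime p"
    and "a \<in> Qp p" and "x0 \<in> Qp p" and "x \<in> Qp p"
    and "cubic_f p a x0 = x0"
    and "max (padic_norm p (padic_add p (padic_mult p (padic_of_rat p 3) x0) a)
                * padic_norm p (padic_sub p x x0))
             (padic_norm p (padic_sub p x x0) ^ 2)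
         < padic_norm p (cubic_f' p a x0)"
  shows "padic_norm p (padic_sub p (cubic_f p a x) (cubic_f p a x0))
         = padic_norm p (cubic_f' p a x0) * padic_norm p (padic_sub p x x0)"
proof -
  note pp = assms(1)
  obtain A where A: "padic_cauchy p A" "a = padic_class p A" using Qp_class[OF assms(2)] by blast
  obtain B where B: "padic_cauchy p B" "x0 = padic_class p B" using Qp_class[OF assms(3)] by blast
  obtain C where C: "padic_cauchy p C" "x = padic_class p C" using Qp_class[OF assms(4)] by blast
  note cs = cauchy_add[OF pp] cauchy_diff[OF pp] cauchy_mult[OF pp] cauchy_const A(1) B(1) C(1)
  note cls = add_class[OF pp] sub_class[OF pp] mult_class[OF pp] norm_class[OF pp]
  define H where "H = (\<lambda>n. C n - B n)"
  define D where "D = (\<lambda>n. 3 * (B n * B n) + 2 * (A n * B n))"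
  define E where "E = (\<lambda>n. 3 * B n + A n)"
  have cH: "padic_cauchy p H" unfolding H_def by (intro cs)
  have cD: "padic_cauchy p D" unfolding D_def by (intro cs)
  have cE: "padic_cauchy p E" unfolding E_def by (intro cs)
  have nH: "padic_norm p (padic_sub p x x0) = Lp p H"
    unfolding B(2) C(2) H_def by (simp add: cls cs)
  have nD: "padic_norm p (cubic_f' p a x0) = Lp p D"
    unfolding B(2) A(2) D_def cubic_f'_def padic_of_rat_def by (simp add: cls cs)
  have nE: "padic_norm p (padic_add p (padic_mult p (padic_of_rat p 3) x0) a) = Lp p E"
    unfolding B(2) A(2) E_def padic_of_rat_def by (simp add: cls cs)
  have nF: "padic_norm p (padic_sub p (cubic_f p a x) (cubic_f p a x0))
     = Lp p (\<lambda>n. C n * (C n * C n) + A n * (C n * C n) - (B n * (B n * B n) + A n * (B n * B n)))"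
    unfolding B(2) A(2) C(2) cubic_f_def by (simp add: cls cs)
  have eq: "(\<lambda>n. C n * (C n * C n) + A n * (C n * C n) - (B n * (B n * B n) + A n * (B n * B n)))
     = (\<lambda>n. H n * ((D n + H n * E n) + H n * H n))"
    unfolding H_def D_def E_def by (rule ext) (simp add: algebra_simps)
  have hyp: "Lp p E * Lp p H < Lp p D" "Lp p H ^ 2 < Lp p D"
    using assms(6) unfolding nH nD nE by auto
  have cHE: "padic_cauchy p (\<lambda>n. H n * E n)" using cH cE by (intro cs)
  have cHH: "padic_cauchy p (\<lambda>n. H n * H n)" using cH by (intro cs)
  have 1: "Lp p (\<lambda>n. D n + H n * E n) = Lp p D"
    using Lp_strict[OF pp cD cHE] Lp_mult[OF pp cH cE] hyp by (simp add: mult.commute)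
  have 2: "Lp p (\<lambda>n. (D n + H n * E n) + H n * H n) = Lp p D"
    using Lp_strict[OF pp _ cHH, of "\<lambda>n. D n + H n * E n"] Lp_mult[OF pp cH cH] hyp 1 cD cHE
    by (simp add: power2_eq_square cs)
  have c3: "padic_cauchy p (\<lambda>n. (D n + H n * E n) + H n * H n)"
    using cD cH cE by (intro cs)
  show ?thesis
    unfolding nF eq nD nH Lp_mult[OF pp cH c3] 2 by simp
qed

end
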